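(* Let $M_0=\mathbb A^2$ with coordinates $(x,y)$, $l_x=\{x=0\}$, $c_1=(0,0)$, and let $M_\ell\to\dots\to M_1\to M_0$ be the sequence of blow-ups where $M_j\to M_{j-1}$ blows up the point $c_j$, with $c_1=(0,0)$ and, for $j\ge2$, $c_j$ the intersection of the strict transform of $l_x$ in $M_{j-1}$ with the exceptional divisor of $M_{j-1}\to M_{j-2}$. Let $P=(m_1\ge\dots\ge m_\ell)$ be a partition of $r$ and let $X\subset M_0$ be the curve $F(x,y)=y^r+s_1(x)y^{r-1}+\dots+s_r(x)=0$, $s_\mu\in\mathbb C[x]$. The following are equivalent: (1) $X$ passes through $c_1$ with multiplicity at least $m_1$, and for $j=2,\dots,\ell$ the total transform of $X$ in $M_{j-1}$ passes through $c_j$ with multiplicity at least $m_1+\dots+m_j$; (2) for all $1\le\mu\le r$, the vanishing order of $s_\mu$ at $x=0$ is at least $\gamma_P(\mu)$; (3) $\partial_y^u\partial_x^aF(0,0)=0$ for all $(u,a)\in G(P)$.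
   Context: Level function $\gamma_P$ of a partition $P=(m_1\ge\dots\ge m_\ell)$ of $r$: number the boxes of its Young diagram (row $j$ has $m_j$ boxes) by $1,\dots,r$, top to bottom within each column, columns left to right; $\gamma_P(k)$ is the column index of box $k$. Level domain: $G(P)=\{(u,a)\in\mathbb Z^2:0\le u<r,\ 0\le a<\gamma_P(r-u)\}$. *)

theory Defs
  imports "HOL-Computational_Algebra.Polynomial"
begin

text \<open>Bivariate polynomials over the complex numbers are represented as
  complex poly poly: the outer variable is the second coordinate (y, resp. v),
  the inner variable is the first coordinate (x, resp. u).
  So the coefficient of x^a y^b in F is coeff (coeff F b) a.\<close>

definition is_partition :: "nat list \<Rightarrow> nat \<Rightarrow> bool" where
  "is_partition ms r \<longleftrightarrow> sorted_wrt (\<ge>) ms \<and> (\<forall>m\<in>set ms. 0 < m) \<and> sum_list ms = r"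

text \<open>Height of column c (c >= 1) of the Young diagram: number of rows j with m_j >= c.\<close>
definition col_height :: "nat list \<Rightarrow> nat \<Rightarrow> nat" where
  "col_height ms c = length (filter (\<lambda>m. c \<le> m) ms)"

text \<open>Level function: boxes numbered top-to-bottom in each column, columns left
  to right; gamma ms k is the column index of box k (for 1 <= k <= r).\<close>
definition gamma :: "nat list \<Rightarrow> nat \<Rightarrow> nat" where
  "gamma ms k = (LEAST c. k \<le> (\<Sum>c'=1..c. col_height ms c'))"

definition levelG :: "nat list \<Rightarrow> (nat \<times> nat) set" where
  "levelG ms = {(u, a). u < sum_list ms \<and> a < gamma ms (sum_list ms - u)}"

definition curveF :: "nat \<Rightarrow> (nat \<Rightarrow> complex poly) \<Rightarrow> complex poly poly" where
  "curveF r s = monom 1 r + (\<Sum>\<mu>=1..r. monom (s \<mu>) (r - \<mu>))"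

text \<open>Total transform of G in the chart of M_k containing c_(k+1): after k blow-ups
  as described, the chart centered at c_(k+1) (origin) has coordinates (u,v) with
  x = u v^k, y = v (v = 0 is the last exceptional divisor, u = 0 the strict
  transform of l_x).\<close>
definition pullback :: "nat \<Rightarrow> complex poly poly \<Rightarrow> complex poly poly" where
  "pullback k G =
     poly (map_poly (\<lambda>C. poly (map_poly (\<lambda>c. [:[:c:]:]) C) (monom [:0, 1:] k)) G) (monom 1 1)"

definition mult0 :: "complex poly poly \<Rightarrow> nat" where
  "mult0 G = (LEAST d. \<exists>a b. a + b = d \<and> coeff (coeff G b) a \<noteq> 0)"

definition dpartial0 :: "nat \<Rightarrow> nat \<Rightarrow> complex poly poly \<Rightarrow> complex" where
  "dpartial0 u a G = poly (poly ((pderiv ^^ u) (map_poly (pderiv ^^ a) G)) 0) 0"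

end

theory Submission
  imports Defs
begin


lemma poly_le: "degree p \<le> n \<Longrightarrow> poly p (x::'a::comm_semiring_1) = (\<Sum>i\<le>n. coeff p i * x^i)"
proof -
  assume "degree p \<le> n"
  then have "poly p x = poly (\<Sum>i\<le>n. monom (coeff p i) i) x"
    using poly_as_sum_of_monoms' by metis
  then show ?thesis by (simp add: poly_sum poly_monom)
qed

lemma poly_map_le: "f 0 = 0 \<Longrightarrow> degree p \<le> n \<Longrightarrow>
   poly (map_poly f p) (x::'a::comm_semiring_1) = (\<Sum>i\<le>n. f (coeff p i) * x^i)"
  by (subst poly_le[of _ n]) (auto intro: order_trans[OF map_poly_degree_leq] simp: coeff_map_poly)

lemma aux1: "smult [:c:] (monom ([:0, 1:] ^ a) n) = monom (monom c a) n"
  by (simp add: smult_monom monom_altdef)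

lemma phi_eq: "poly (map_poly (\<lambda>c. [:[:c:]:]) (C::complex poly)) (monom [:0, 1:] k) =
   (\<Sum>a\<le>degree C. monom (monom (coeff C a) a) (k*a))"
  apply (rule trans[OF poly_map_le[where n="degree C"]])
    apply simp_all
  apply (rule sum.cong, simp)
  apply (simp add: monom_power aux1)
  done

lemma pullback_eq: "pullback k G = (\<Sum>b\<le>degree G. \<Sum>a\<le>degree (coeff G b).
    monom (monom (coeff (coeff G b) a) a) (k*a + b))"
  unfolding pullback_def
  apply (rule trans[OF poly_map_le[where n="degree G"]])
    apply (simp_all add: phi_eq)
  apply (rule sum.cong, simp)
  apply (simp add: monom_power sum_distrib_right mult_monom)
  done

lemma sum_delta_gen: "finite A \<Longrightarrow> (\<And>x. x \<notin> A \<Longrightarrow> f x = 0) \<Longrightarrow>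
   (\<Sum>y\<in>A. if y = x then f y else 0) = f x"
  by (cases "x \<in> A") (simp_all add: sum.delta')

lemma pullback_coeff: "coeff (coeff (pullback k G) e) a =
   (if k*a \<le> e then coeff (coeff G (e - k*a)) a else 0)"
proof -
  have "coeff (coeff (pullback k G) e) a = (\<Sum>b\<le>degree G. \<Sum>a'\<le>degree (coeff G b).
      if a' = a then (if k*a' + b = e then coeff (coeff G b) a' else 0) else 0)"
    unfolding pullback_eq coeff_sum by (intro sum.cong refl) auto
  also have "\<dots> = (\<Sum>b\<le>degree G. if k*a + b = e then coeff (coeff G b) a else 0)"
    by (rule sum.cong[OF refl], rule sum_delta_gen) (auto simp: coeff_eq_0)
  also have "\<dots> = (\<Sum>b\<le>degree G. if b = e - k*a then (if k*a \<le> e then coeff (coeff G b) a else 0) else 0)"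
    by (rule sum.cong[OF refl]) auto
  also have "\<dots> = (if k*a \<le> e then coeff (coeff G (e - k*a)) a else 0)"
    by (rule sum_delta_gen) (auto simp: coeff_eq_0)
  finally show ?thesis .
qed


lemma col_height_Cons: "col_height (m#ms) c = (if c \<le> m then 1 else 0) + col_height ms c"
  by (simp add: col_height_def)

lemma sum_ind_min: "(\<Sum>c'=1..c. (if c' \<le> (m::nat) then 1 else 0::nat)) = min m c"
proof -
  have "(\<Sum>c'=1..c. (if c' \<le> (m::nat) then 1 else 0::nat)) = card {c'\<in>{1..c}. c' \<le> m}"
    by (simp add: sum.If_cases Int_def)
  also have "{c'\<in>{1..c}. c' \<le> m} = {1..min m c}" by auto
  then have "card {c'\<in>{1..c}. c' \<le> m} = min m c" by simp
  finally show ?thesis by simp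
qed

lemma N_eq: "(\<Sum>c'=1..c. col_height ms c') = sum_list (map (\<lambda>m. min m c) ms)"
proof (induction ms)
  case Nil
  then show ?case by (simp add: col_height_def)
next
  case (Cons m ms)
  then show ?case unfolding col_height_Cons sum.distrib sum_ind_min by simp
qed

lemma N_mono: "c \<le> c' \<Longrightarrow> (\<Sum>i=1..c. col_height ms i) \<le> (\<Sum>i=1..c'. col_height ms i)"
  by (rule sum_mono2) auto

lemma sum_min_id: "\<forall>m\<in>set ms. m \<le> c \<Longrightarrow> sum_list (map (\<lambda>m. min m c) ms) = sum_list ms"
  by (induction ms) (auto simp: min_def)

lemma gamma_le:
  assumes "is_partition ms r" "\<mu> \<le> r"
  shows "gamma ms \<mu> \<le> a \<longleftrightarrow> \<mu> \<le> sum_list (map (\<lambda>m. min m a) ms)"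
proof -
  have r: "sum_list ms = r" using assms(1) by (simp add: is_partition_def)
  have "\<forall>m\<in>set ms. m \<le> r" using r member_le_sum_list by blast
  then have ex: "\<mu> \<le> (\<Sum>c'=1..r. col_height ms c')"
    using assms(2) unfolding N_eq by (simp add: sum_min_id r)
  show ?thesis
  proof
    assume "gamma ms \<mu> \<le> a"
    moreover have "\<mu> \<le> (\<Sum>c'=1..gamma ms \<mu>. col_height ms c')"
      unfolding gamma_def using ex by (rule LeastI)
    ultimately show "\<mu> \<le> sum_list (map (\<lambda>m. min m a) ms)"
      using N_mono N_eq by (metis order_trans)
  next
    assume "\<mu> \<le> sum_list (map (\<lambda>m. min m a) ms)"
    then show "gamma ms \<mu> \<le> a" unfolding gamma_def N_eq by (rule Least_le)
  qed
qed

lemma sum_min_le1: "sum_list (map (\<lambda>m. min m a) xs) \<le> a * length xs"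
  by (induction xs) auto

lemma sum_min_le2: "sum_list (map (\<lambda>m::nat. min m a) xs) \<le> sum_list xs"
  by (induction xs) auto

lemma dropWhile_lt: "sorted_wrt (\<ge>) xs \<Longrightarrow> x \<in> set (dropWhile (\<lambda>m. a \<le> m) xs) \<Longrightarrow> x < (a::nat)"
proof (induction xs)
  case Nil
  then show ?case by simp
next
  case (Cons y ys)
  then show ?case by (cases "a \<le> y") (auto split: if_splits)
qed

lemma takeWhile_sum: "sum_list (map (\<lambda>m. min m a) (takeWhile (\<lambda>m. a \<le> m) xs)) = a * length (takeWhile (\<lambda>m. (a::nat) \<le> m) xs)"
  by (induction xs) auto

lemma combC:
  assumes "sorted_wrt (\<ge>) ms" "\<mu> \<le> sum_list ms"
  shows "(\<forall>j\<in>{1..length ms}. sum_list (take j ms) + \<mu> \<le> a * j + sum_list ms)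
     \<longleftrightarrow> \<mu> \<le> sum_list (map (\<lambda>m. min m a) ms)"
proof
  assume H: "\<forall>j\<in>{1..length ms}. sum_list (take j ms) + \<mu> \<le> a * j + sum_list ms"
  define tw where "tw = takeWhile (\<lambda>m. a \<le> m) ms"
  define dw where "dw = dropWhile (\<lambda>m. a \<le> m) ms"
  have ms: "ms = tw @ dw" unfolding tw_def dw_def by simp
  have "\<forall>m\<in>set dw. m < a" using dropWhile_lt[OF assms(1)] dw_def by blast
  then have dws: "sum_list (map (\<lambda>m. min m a) dw) = sum_list dw"
    by (intro sum_min_id) auto
  have tws: "sum_list (map (\<lambda>m. min m a) tw) = a * length tw"
    unfolding tw_def by (rule takeWhile_sum)
  have S: "sum_list (map (\<lambda>m. min m a) ms) = a * length tw + sum_list dw"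
    using dws tws ms by (metis map_append sum_list_append)
  show "\<mu> \<le> sum_list (map (\<lambda>m. min m a) ms)"
  proof (cases "length tw = 0")
    case True
    then show ?thesis using S ms assms(2) by simp
  next
    case False
    then have "length tw \<in> {1..length ms}" using ms by (auto simp: Suc_le_eq)
    with H have "sum_list (take (length tw) ms) + \<mu> \<le> a * length tw + sum_list ms" by blast
    moreover have "take (length tw) ms = tw" using ms by simp
    ultimately show ?thesis using S ms by simp
  qed
next
  assume H: "\<mu> \<le> sum_list (map (\<lambda>m. min m a) ms)"
  show "\<forall>j\<in>{1..length ms}. sum_list (take j ms) + \<mu> \<le> a * j + sum_list ms"
  proof
    fix j assume j: "j \<in> {1..length ms}"
    have "sum_list (map (\<lambda>m. min m a) ms) = sum_list (map (\<lambda>m. min m a) (take j ms))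
        + sum_list (map (\<lambda>m. min m a) (drop j ms))"
      by (metis append_take_drop_id map_append sum_list_append)
    also have "\<dots> \<le> a * j + sum_list (drop j ms)"
      using sum_min_le1[of a "take j ms"] sum_min_le2[of a "drop j ms"] j by simp
    finally have "\<mu> \<le> a * j + sum_list (drop j ms)" using H by simp
    moreover have "sum_list ms = sum_list (take j ms) + sum_list (drop j ms)"
      by (metis append_take_drop_id sum_list_append)
    ultimately show "sum_list (take j ms) + \<mu> \<le> a * j + sum_list ms" by simp
  qed
qed



lemma coeff_F: "coeff (curveF r s) b = (if b = r then 1 else if b < r then s (r - b) else 0)"
proof -
  have "coeff (curveF r s) b = (if r = b then 1 else 0) + (\<Sum>\<mu>\<in>{1..r}. if r - \<mu> = b then s \<mu> else 0)"
    unfolding curveF_def by (simp add: coeff_sum)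
  also have "(\<Sum>\<mu>\<in>{1..r}. if r - \<mu> = b then s \<mu> else 0) = (\<Sum>\<mu>\<in>{1..r}. if \<mu> = r - b \<and> b < r then s \<mu> else 0)"
    by (rule sum.cong) auto
  also have "\<dots> = (if b < r then s (r - b) else 0)"
    by (cases "b < r") (simp_all add: sum.delta')
  finally show ?thesis by auto
qed

lemma dpartial_eq: "dpartial0 u a G = fact u * fact a * coeff (coeff G u) a"
proof -
  have A: "coeff ((pderiv ^^ n) (p::'b::{idom,ring_char_0} poly)) 0 = fact n * coeff p n" for n p
    by (simp add: coeff_higher_pderiv pochhammer_fact)
  have Fc: "(fact n :: 'b::{idom,ring_char_0} poly) = [:fact n:]" for n
    by (metis of_nat_fact of_nat_poly)
  show ?thesis unfolding dpartial0_def poly_0_coeff_0 A Fc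
    by (simp add: coeff_map_poly A)
qed

lemma mult0_ge:
  assumes "coeff (coeff P b0) a0 \<noteq> 0"
  shows "M \<le> mult0 P \<longleftrightarrow> (\<forall>a b. coeff (coeff P b) a \<noteq> 0 \<longrightarrow> M \<le> a + b)"
proof
  assume H: "M \<le> mult0 P"
  show "\<forall>a b. coeff (coeff P b) a \<noteq> 0 \<longrightarrow> M \<le> a + b"
  proof (intro allI impI)
    fix a b assume "coeff (coeff P b) a \<noteq> 0"
    then have "mult0 P \<le> a + b" unfolding mult0_def by (intro Least_le) blast
    with H show "M \<le> a + b" by simp
  qed
next
  assume H: "\<forall>a b. coeff (coeff P b) a \<noteq> 0 \<longrightarrow> M \<le> a + b"
  have "\<exists>a b. a + b = mult0 P \<and> coeff (coeff P b) a \<noteq> 0"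
    unfolding mult0_def by (rule LeastI[where k="a0+b0"]) (use assms in blast)
  then obtain a b where "a + b = mult0 P" "coeff (coeff P b) a \<noteq> 0" by blast
  then show "M \<le> mult0 P" using H by metis
qed

lemma sum_nth_take: "j \<le> length xs \<Longrightarrow> (\<Sum>i<j. xs ! i) = sum_list (take j xs)"
  by (simp add: sum_list_sum_nth atLeast0LessThan)


lemma x_pow_dvd: "([:0, 1:] ^ g dvd (p::complex poly)) \<longleftrightarrow> (\<forall>a<g. coeff p a = 0)"
  using monom_1_dvd_iff'[of g p] by (simp add: monom_altdef)

lemma step1:
  fixes ms :: "nat list" and r :: nat and s :: "nat \<Rightarrow> complex poly" and M j :: nat
  assumes Mr: "M \<le> r" and j: "1 \<le> j"
  shows "M \<le> mult0 (pullback (j - 1) (curveF r s)) \<longleftrightarrow>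
     (\<forall>\<mu>\<in>{1..r}. \<forall>a. coeff (s \<mu>) a \<noteq> 0 \<longrightarrow> M + \<mu> \<le> a * j + r)"
proof -
  let ?P = "pullback (j - 1) (curveF r s)"
  have w: "coeff (coeff ?P r) 0 \<noteq> 0" by (simp add: pullback_coeff coeff_F)
  have jj: "a * j = a + (j - 1) * a" for a using j by (cases j) auto
  show ?thesis unfolding mult0_ge[OF w]
  proof
    assume H: "\<forall>a b. coeff (coeff ?P b) a \<noteq> 0 \<longrightarrow> M \<le> a + b"
    show "\<forall>\<mu>\<in>{1..r}. \<forall>a. coeff (s \<mu>) a \<noteq> 0 \<longrightarrow> M + \<mu> \<le> a * j + r"
    proof (intro ballI allI impI)
      fix \<mu> a assume mu: "\<mu> \<in> {1..r}" and nz: "coeff (s \<mu>) a \<noteq> 0"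
      have "coeff (coeff ?P ((r - \<mu>) + (j - 1) * a)) a = coeff (coeff (curveF r s) (r - \<mu>)) a"
        by (simp add: pullback_coeff)
      also have "\<dots> = coeff (s \<mu>) a"
      proof -
        have "r - \<mu> < r" "r - (r - \<mu>) = \<mu>" using mu by auto
        then show ?thesis by (simp add: coeff_F)
      qed
      finally have "coeff (coeff ?P ((r - \<mu>) + (j - 1) * a)) a = coeff (s \<mu>) a" .
      with nz H have "M \<le> a + ((r - \<mu>) + (j - 1) * a)" by metis
      moreover have "\<mu> \<le> r" using mu by simp
      ultimately show "M + \<mu> \<le> a * j + r" using jj[of a] by linarith
    qed
  next
    assume H: "\<forall>\<mu>\<in>{1..r}. \<forall>a. coeff (s \<mu>) a \<noteq> 0 \<longrightarrow> M + \<mu> \<le> a * j + r"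
    show "\<forall>a b. coeff (coeff ?P b) a \<noteq> 0 \<longrightarrow> M \<le> a + b"
    proof (intro allI impI)
      fix a e assume nz: "coeff (coeff ?P e) a \<noteq> 0"
      have pc: "coeff (coeff ?P e) a = (if (j - 1) * a \<le> e then coeff (coeff (curveF r s) (e - (j - 1) * a)) a else 0)"
        by (rule pullback_coeff)
      have le: "(j - 1) * a \<le> e"
      proof (rule ccontr)
        assume "\<not> (j - 1) * a \<le> e"
        then have "coeff (coeff ?P e) a = 0" using pc by simp
        with nz show False by simp
      qed
      define b where "b = e - (j - 1) * a"
      have nz2: "coeff (coeff (curveF r s) b) a \<noteq> 0" using nz pc le unfolding b_def by simp
      have e: "e = b + (j - 1) * a" using le b_def by simp
      show "M \<le> a + e"
      proof (cases "b = r")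
        case True
        then show ?thesis using Mr e by linarith
      next
        case False
        have cF: "coeff (curveF r s) b = (if b < r then s (r - b) else 0)"
          using False by (simp add: coeff_F)
        have "b < r"
        proof (rule ccontr)
          assume "\<not> b < r"
          then have "coeff (curveF r s) b = 0" using cF by simp
          with nz2 show False by simp
        qed
        then have "coeff (s (r - b)) a \<noteq> 0" using nz2 cF by simp
        moreover have "r - b \<in> {1..r}" using \<open>b < r\<close> by auto
        ultimately have "M + (r - b) \<le> a * j + r" using H by blast
        then show ?thesis using e jj[of a] \<open>b < r\<close> by linarith
      qed
    qed
  qed
qed

theorem mainTheorem18:
  fixes ms :: "nat list" and r :: nat and s :: "nat \<Rightarrow> complex poly"
  assumes "is_partition ms r"
  defines "F \<equiv> curveF r s"
  shows "((\<forall>j\<in>{1..length ms}. (\<Sum>i<j. ms ! i) \<le> mult0 (pullback (j - 1) F))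
            \<longleftrightarrow> (\<forall>\<mu>\<in>{1..r}. [:0, 1:] ^ gamma ms \<mu> dvd s \<mu>))
       \<and> ((\<forall>\<mu>\<in>{1..r}. [:0, 1:] ^ gamma ms \<mu> dvd s \<mu>)
            \<longleftrightarrow> (\<forall>(u, a)\<in>levelG ms. dpartial0 u a F = 0))"
proof
  have r: "sum_list ms = r" and sorted: "sorted_wrt (\<ge>) ms"
    using assms(1) by (auto simp: is_partition_def)
  have Mj: "(\<Sum>i<j. ms ! i) = sum_list (take j ms)" if "j \<in> {1..length ms}" for j
    using that by (simp add: sum_nth_take)
  have Mr: "sum_list (take j ms) \<le> r" for j
    using r by (metis append_take_drop_id le_add1 sum_list_append)
  have "(\<forall>j\<in>{1..length ms}. (\<Sum>i<j. ms ! i) \<le> mult0 (pullback (j - 1) F))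
     \<longleftrightarrow> (\<forall>j\<in>{1..length ms}. \<forall>\<mu>\<in>{1..r}. \<forall>a. coeff (s \<mu>) a \<noteq> 0 \<longrightarrow> sum_list (take j ms) + \<mu> \<le> a * j + r)"
  proof (intro ball_cong refl)
    fix j assume j: "j \<in> {1..length ms}"
    show "((\<Sum>i<j. ms ! i) \<le> mult0 (pullback (j - 1) F)) =
         (\<forall>\<mu>\<in>{1..r}. \<forall>a. coeff (s \<mu>) a \<noteq> 0 \<longrightarrow> sum_list (take j ms) + \<mu> \<le> a * j + r)"
      unfolding Mj[OF j] F_def using j by (intro step1[OF Mr]) simp
  qed
  also have "\<dots> \<longleftrightarrow> (\<forall>\<mu>\<in>{1..r}. \<forall>a. coeff (s \<mu>) a \<noteq> 0 \<longrightarrow>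
       (\<forall>j\<in>{1..length ms}. sum_list (take j ms) + \<mu> \<le> a * j + r))"
    by blast
  also have "\<dots> \<longleftrightarrow> (\<forall>\<mu>\<in>{1..r}. \<forall>a. coeff (s \<mu>) a \<noteq> 0 \<longrightarrow> gamma ms \<mu> \<le> a)"
  proof (intro ball_cong refl all_cong imp_cong)
    fix \<mu> a assume mu: "\<mu> \<in> {1..r}"
    have "(\<forall>j\<in>{1..length ms}. sum_list (take j ms) + \<mu> \<le> a * j + sum_list ms)
       \<longleftrightarrow> \<mu> \<le> sum_list (map (\<lambda>m. min m a) ms)"
      using mu r by (intro combC[OF sorted]) simp
    also have "\<dots> \<longleftrightarrow> gamma ms \<mu> \<le> a"
      using mu by (intro gamma_le[OF assms(1), symmetric]) simp
    finally show "(\<forall>j\<in>{1..length ms}. sum_list (take j ms) + \<mu> \<le> a * j + r) = (gamma ms \<mu> \<le> a)"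
      unfolding r .
  qed
  also have "\<dots> \<longleftrightarrow> (\<forall>\<mu>\<in>{1..r}. [:0, 1:] ^ gamma ms \<mu> dvd s \<mu>)"
    unfolding x_pow_dvd by (intro ball_cong refl) (metis not_le)
  finally show "(\<forall>j\<in>{1..length ms}. (\<Sum>i<j. ms ! i) \<le> mult0 (pullback (j - 1) F))
            \<longleftrightarrow> (\<forall>\<mu>\<in>{1..r}. [:0, 1:] ^ gamma ms \<mu> dvd s \<mu>)" .
next
  have r: "sum_list ms = r"
    using assms(1) by (auto simp: is_partition_def)
  have "(\<forall>(u, a)\<in>levelG ms. dpartial0 u a F = 0) \<longleftrightarrow>
        (\<forall>u<r. \<forall>a<gamma ms (r - u). coeff (s (r - u)) a = 0)"
  proof -
    have "dpartial0 u a F = 0 \<longleftrightarrow> coeff (s (r - u)) a = 0" if "u < r" for u a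
      unfolding F_def dpartial_eq using that by (simp add: coeff_F)
    moreover have "(u, a) \<in> levelG ms \<longleftrightarrow> u < r \<and> a < gamma ms (r - u)" for u a
      unfolding levelG_def r by simp
    ultimately show ?thesis by blast
  qed
  also have "\<dots> \<longleftrightarrow> (\<forall>\<mu>\<in>{1..r}. \<forall>a<gamma ms \<mu>. coeff (s \<mu>) a = 0)"
  proof
    assume H: "\<forall>u<r. \<forall>a<gamma ms (r - u). coeff (s (r - u)) a = 0"
    show "\<forall>\<mu>\<in>{1..r}. \<forall>a<gamma ms \<mu>. coeff (s \<mu>) a = 0"
    proof (intro ballI allI impI)
      fix \<mu> a assume "\<mu> \<in> {1..r}" "a < gamma ms \<mu>"
      then show "coeff (s \<mu>) a = 0" using H[rule_format, of "r - \<mu>" a] by auto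
    qed
  next
    assume H: "\<forall>\<mu>\<in>{1..r}. \<forall>a<gamma ms \<mu>. coeff (s \<mu>) a = 0"
    then show "\<forall>u<r. \<forall>a<gamma ms (r - u). coeff (s (r - u)) a = 0" by auto
  qed
  also have "\<dots> \<longleftrightarrow> (\<forall>\<mu>\<in>{1..r}. [:0, 1:] ^ gamma ms \<mu> dvd s \<mu>)"
    unfolding x_pow_dvd by blast
  finally show "(\<forall>\<mu>\<in>{1..r}. [:0, 1:] ^ gamma ms \<mu> dvd s \<mu>)
            \<longleftrightarrow> (\<forall>(u, a)\<in>levelG ms. dpartial0 u a F = 0)" by (rule sym)
qed

end
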